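(* There exist an environment $E$ and a total preorder $\succeq$ on $\Pi^E$ such that $\succeq\in\mathrm{Ord}_{\mathrm{RRL}}(E)$ but $\succeq\notin\mathrm{Ord}_{\mathrm{FTR}}(E)$. (Such an ordering can be obtained from an RRL specification with $\alpha>0$ and $F$ the Shannon entropy $F(p)=-\sum_a p(a)\log p(a)$.)
   Context: An environment is a tuple $E=(\mathcal S,\mathcal A,\mathcal T,\mathcal I)$ where $\mathcal S,\mathcal A$ are finite nonempty sets, $\mathcal T:\mathcal S\times\mathcal A\to\Delta(\mathcal S)$ and $\mathcal I\in\Delta(\mathcal S)$. A policy is a map $\pi:\mathcal S\to\Delta(\mathcal A)$ (stationary, possibly stochastic); $\Pi^E$ denotes the set of all policies. A trajectory $\xi=(s_0,a_0,s_1,a_1,\dots)\in\Xi:=\mathcal S\times(\mathcal A\times\mathcal S)^\omega$ is generated under $\pi$ by $s_0\sim\mathcal I$, $a_t\sim\pi(s_t)$, $s_{t+1}\sim\mathcal T(s_t,a_t)$; $\mathbb E^\pi_\xi$ denotes expectation under this distribution. An objective-specification formalism $X$ assigns to each environment $E$ a set of objective specifications, each inducing a total preorder $\succeq$ on $\Pi^E$; $\mathrm{Ord}_X(E)$ is the set of total preorders so induced. A specification defining a scalar $J:\Pi^E\to\mathbb R$ induces $\pi_1\succeq\pi_2\iff J(\pi_1)\ge J(\pi_2)$. RRL: specification $(\mathcal R,\alpha,F,\gamma)$ with $\mathcal R:\mathcal S\times\mathcal A\times\mathcal S\to\mathbb R$, $\alpha\in\mathbb R$, $F:\Delta(\mathcal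 A)\to\mathbb R$, $\gamma\in[0,1)$; $J(\pi)=\mathbb E^\pi_\xi[\sum_{t=0}^\infty\gamma^t(\mathcal R(s_t,a_t,s_{t+1})-\alpha F(\pi(s_t)))]$. FTR: specification $(f)$ with $f:\Xi\to\mathbb R$ Borel measurable (product topology on $\Xi$) such that $\mathbb E^\pi_\xi[f(\xi)]$ is well-defined and finite for every policy; $J(\pi)=\mathbb E^\pi_\xi[f(\xi)]$. *)

theory Defs
  imports "HOL-Probability.Probability"
begin

record env =
  St :: "nat set"
  Ac :: "nat set"
  Tr :: "nat \<Rightarrow> nat \<Rightarrow> nat pmf"
  Init :: "nat pmf"

definition wf_env :: "env \<Rightarrow> bool" where
  "wf_env E \<longleftrightarrow> finite (St E) \<and> St E \<noteq> {} \<and> finite (Ac E) \<and> Ac E \<noteq> {}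
     \<and> (\<forall>s\<in>St E. \<forall>a\<in>Ac E. set_pmf (Tr E s a) \<subseteq> St E)
     \<and> set_pmf (Init E) \<subseteq> St E"

definition policies :: "env \<Rightarrow> (nat \<Rightarrow> nat pmf) set" where
  "policies E = {\<pi>. \<forall>s\<in>St E. set_pmf (\<pi> s) \<subseteq> Ac E}"

text \<open>Trajectories: streams of state-action pairs (s_t, a_t); this is the sequence
  s0, a0, s1, a1, ... regrouped. Measurable structure: product (cylinder) sigma algebra
  of discrete spaces, i.e. the Borel sigma algebra of the product topology.\<close>
abbreviation traj_space :: "(nat \<times> nat) stream measure" where
  "traj_space \<equiv> stream_space (count_space UNIV)"

fun prefix_cont :: "env \<Rightarrow> (nat \<Rightarrow> nat pmf) \<Rightarrow> nat \<Rightarrow> nat \<Rightarrow> (nat \<times> nat) list \<Rightarrow> real" where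
  "prefix_cont E \<pi> s a [] = 1"
| "prefix_cont E \<pi> s a ((s', a') # xs) =
     pmf (Tr E s a) s' * pmf (\<pi> s') a' * prefix_cont E \<pi> s' a' xs"

fun prefix_prob :: "env \<Rightarrow> (nat \<Rightarrow> nat pmf) \<Rightarrow> (nat \<times> nat) list \<Rightarrow> real" where
  "prefix_prob E \<pi> [] = 1"
| "prefix_prob E \<pi> ((s, a) # xs) = pmf (Init E) s * pmf (\<pi> s) a * prefix_cont E \<pi> s a xs"

text \<open>M is the trajectory distribution generated by s0 ~ I, a_t ~ pi(s_t), s_{t+1} ~ T(s_t,a_t):
  a probability measure on trajectories with the corresponding finite-dimensional marginals.\<close>
definition is_traj_measure :: "env \<Rightarrow> (nat \<Rightarrow> nat pmf) \<Rightarrow> (nat \<times> nat) stream measure \<Rightarrow> bool" where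
  "is_traj_measure E \<pi> M \<longleftrightarrow> sets M = sets traj_space \<and> prob_space M
     \<and> (\<forall>xs. emeasure M {\<omega> \<in> space M. stake (length xs) \<omega> = xs} = ennreal (prefix_prob E \<pi> xs))"

definition traj :: "env \<Rightarrow> (nat \<Rightarrow> nat pmf) \<Rightarrow> (nat \<times> nat) stream measure" where
  "traj E \<pi> = (THE M. is_traj_measure E \<pi> M)"

definition induced_ord :: "env \<Rightarrow> ((nat \<Rightarrow> nat pmf) \<Rightarrow> real) \<Rightarrow> (nat \<Rightarrow> nat pmf) rel" where
  "induced_ord E J = {(\<pi>1, \<pi>2). \<pi>1 \<in> policies E \<and> \<pi>2 \<in> policies E \<and> J \<pi>1 \<ge> J \<pi>2}"

text \<open>RRL objective. The reward/regulariser terms are only evaluated along trajectories in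
  S x A (which holds almost surely); the guard only fixes the integrand on a null set.\<close>
definition J_RRL :: "env \<Rightarrow> (nat \<Rightarrow> nat \<Rightarrow> nat \<Rightarrow> real) \<Rightarrow> real \<Rightarrow> (nat pmf \<Rightarrow> real) \<Rightarrow> real
                      \<Rightarrow> (nat \<Rightarrow> nat pmf) \<Rightarrow> real" where
  "J_RRL E R \<alpha> F \<gamma> \<pi> =
     (\<integral>\<omega>. (\<Sum>t. \<gamma> ^ t *
        (if fst (\<omega> !! t) \<in> St E \<and> snd (\<omega> !! t) \<in> Ac E \<and> fst (\<omega> !! Suc t) \<in> St E
         then R (fst (\<omega> !! t)) (snd (\<omega> !! t)) (fst (\<omega> !! Suc t)) - \<alpha> * F (\<pi> (fst (\<omega> !! t)))
         else 0)) \<partial>traj E \<pi>)"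

definition Ord_RRL :: "env \<Rightarrow> (nat \<Rightarrow> nat pmf) rel set" where
  "Ord_RRL E = {induced_ord E (J_RRL E R \<alpha> F \<gamma>) | R \<alpha> F \<gamma>. 0 \<le> \<gamma> \<and> \<gamma> < 1}"

definition Ord_FTR :: "env \<Rightarrow> (nat \<Rightarrow> nat pmf) rel set" where
  "Ord_FTR E = {induced_ord E (\<lambda>\<pi>. \<integral>\<omega>. f \<omega> \<partial>traj E \<pi>) | f.
                  f \<in> borel_measurable traj_space \<and> (\<forall>\<pi>\<in>policies E. integrable (traj E \<pi>) f)}"

text \<open>Shannon entropy of a distribution over A (natural logarithm; 0 log 0 = 0).\<close>
definition shannon_entropy :: "nat set \<Rightarrow> nat pmf \<Rightarrow> real" where
  "shannon_entropy A p = - (\<Sum>a\<in>A. pmf p a * ln (pmf p a))"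

end

theory Submission
  imports Defs
begin

definition E0 :: env where
  "E0 = \<lparr>St = {0,1}, Ac = {0,1}, Tr = (\<lambda>s a. return_pmf 1), Init = return_pmf 0\<rparr>"

definition mk :: "nat \<Rightarrow> (nat \<times> nat) stream" where
  "mk b = (0,b) ## sconst (1,0)"

lemma stake_sconst: "stake m (sconst x) = replicate m x"
  by (simp add: map_replicate_const)

lemma Init_E0: "Init E0 = return_pmf 0" by (simp add: E0_def)

lemma wf_E0: "wf_env E0"
  by (auto simp: wf_env_def E0_def)

lemma prefix_cont_E0:
  assumes "\<pi> 1 = return_pmf 0"
  shows "prefix_cont E0 \<pi> s a xs = (if xs = replicate (length xs) (1,0) then 1 else 0)"
proof (induction xs arbitrary: s a)
  case Nil then show ?case by simp
next
  case (Cons x xs)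
  obtain s' a' where x: "x = (s',a')" by force
  show ?case using Cons[of s' a'] assms
    by (cases "s' = 1"; cases "a' = 0") (auto simp: x E0_def indicator_def)
qed

lemma stake_eq_iff: "(stake (length xs) \<omega> = xs) = (\<forall>i<length xs. \<omega> !! i = xs ! i)"
  by (metis length_stake nth_equalityI stake_nth)

lemma traj_unique:
  assumes "is_traj_measure E \<pi> M" "is_traj_measure E \<pi> N"
  shows "M = N"
proof (rule stream_space_eq_sstart[where S=UNIV])
  show "prob_space M" "prob_space N" "sets M = sets traj_space" "sets N = sets traj_space"
    using assms by (auto simp: is_traj_measure_def)
  then have sM: "space M = UNIV" and sN: "space N = UNIV"
    by (auto dest!: sets_eq_imp_space_eq simp: space_stream_space)
  show "AE x in M. x \<in> streams UNIV" "AE x in N. x \<in> streams UNIV" by auto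
  fix xs :: "(nat \<times> nat) list"
  have e: "sstart UNIV xs = {\<omega>. stake (length xs) \<omega> = xs}"
    by (auto simp: sstart_eq stake_eq_iff)
  show "emeasure M (sstart UNIV xs) = emeasure N (sstart UNIV xs)"
    using assms unfolding e is_traj_measure_def sM sN by simp
qed simp

lemma traj_eqI: "is_traj_measure E \<pi> M \<Longrightarrow> traj E \<pi> = M"
  unfolding traj_def using traj_unique by blast

lemma traj_E0:
  assumes "\<pi> 1 = return_pmf 0"
  shows "traj E0 \<pi> = distr (measure_pmf (\<pi> 0)) traj_space mk"
proof (rule traj_eqI)
  let ?M = "distr (measure_pmf (\<pi> 0)) traj_space mk"
  have sp: "space ?M = UNIV" by (simp add: space_stream_space)
  have mk_meas: "mk \<in> measurable (measure_pmf (\<pi> 0)) traj_space" by (simp add: space_stream_space)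
  show "is_traj_measure E0 \<pi> ?M"
    unfolding is_traj_measure_def
  proof (intro conjI allI)
    show "sets ?M = sets traj_space" by simp
    show "prob_space ?M" by (rule prob_space.prob_space_distr) (auto simp: measure_pmf.prob_space_axioms mk_meas space_stream_space)
    fix xs :: "(nat \<times> nat) list"
    have cyl: "{\<omega>. stake (length xs) \<omega> = xs} \<in> sets traj_space"
    proof -
      have "{\<omega>. stake (length xs) \<omega> = xs} = sstart UNIV xs"
        by (auto simp: sstart_eq stake_eq_iff)
      then show ?thesis by simp
    qed
    have "emeasure ?M {\<omega> \<in> space ?M. stake (length xs) \<omega> = xs}
        = emeasure (measure_pmf (\<pi> 0)) {b. stake (length xs) (mk b) = xs}"
      using cyl mk_meas by (simp add: sp emeasure_distr vimage_def space_stream_space)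
    also have "\<dots> = ennreal (prefix_prob E0 \<pi> xs)"
    proof (cases xs)
      case Nil then show ?thesis by (simp add: measure_pmf.emeasure_space_1[simplified])
    next
      case (Cons x ys)
      obtain s a where x: "x = (s,a)" by force
      have "{b. stake (length xs) (mk b) = xs} =
              (if s = 0 \<and> ys = replicate (length ys) (1,0) then {a} else {})"
        by (auto simp: Cons x mk_def stake_sconst map_replicate_const)
      moreover have "prefix_prob E0 \<pi> xs =
              (if s = 0 \<and> ys = replicate (length ys) (1,0) then pmf (\<pi> 0) a else 0)"
        using prefix_cont_E0[of \<pi>, OF assms] by (simp add: Cons x Init_E0 indicator_def)
      ultimately show ?thesis by (simp add: emeasure_pmf_single)
    qed
    finally show "emeasure ?M {\<omega> \<in> space ?M. stake (length xs) \<omega> = xs} = ennreal (prefix_prob E0 \<pi> xs)" .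
  qed
qed

lemma meas_G: "(\<lambda>\<omega>. \<Phi> (\<omega> !! 0) (\<omega> !! 1) :: real) \<in> borel_measurable traj_space"
proof (rule measurable_compose_countable'[where I=UNIV and g="\<lambda>\<omega>. \<omega> !! 0" and f="\<lambda>i \<omega>. \<Phi> i (\<omega> !! 1)"])
  fix i
  show "(\<lambda>\<omega>. \<Phi> i (\<omega> !! 1)) \<in> borel_measurable traj_space"
    by (rule measurable_compose[OF measurable_snth borel_measurable_count_space])
  show "(\<lambda>\<omega>. \<omega> !! 0) \<in> measurable traj_space (count_space UNIV)"
    by (rule measurable_snth)
qed simp

lemma suminf_gamma0: "(\<Sum>t. (0::real) ^ t * g t) = g 0"
proof -
  have e: "(\<lambda>t. (0::real) ^ t * g t) = (\<lambda>t. if t = 0 then g t else 0)"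
    by (auto simp: fun_eq_iff)
  show ?thesis unfolding e by (rule sums_unique[symmetric, OF sums_single])
qed

definition H :: "nat pmf \<Rightarrow> real" where "H = shannon_entropy (Ac E0)"

definition JR :: "(nat \<Rightarrow> nat pmf) \<Rightarrow> real" where
  "JR = J_RRL E0 (\<lambda>_ _ _. 0) 1 H 0"

lemma JR_val:
  assumes "\<pi> 1 = return_pmf 0" "set_pmf (\<pi> 0) \<subseteq> {0,1}"
  shows "JR \<pi> = - H (\<pi> 0)"
proof -
  define \<Phi> where "\<Phi> = (\<lambda>(x::nat\<times>nat) (y::nat\<times>nat). if fst x \<in> St E0 \<and> snd x \<in> Ac E0 \<and> fst y \<in> St E0
         then (0::real) - 1 * H (\<pi> (fst x)) else 0)"
  have "JR \<pi> = (\<integral>\<omega>. \<Phi> (\<omega> !! 0) (\<omega> !! 1) \<partial>traj E0 \<pi>)"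
    unfolding JR_def J_RRL_def suminf_gamma0 \<Phi>_def by simp
  also have "\<dots> = (\<integral>b. \<Phi> (mk b !! 0) (mk b !! 1) \<partial>measure_pmf (\<pi> 0))"
    unfolding traj_E0[of \<pi>, OF assms(1)]
    by (rule integral_distr) (auto simp: meas_G space_stream_space)
  also have "\<dots> = (\<Sum>a\<in>{0,1}. \<Phi> (mk a !! 0) (mk a !! 1) * pmf (\<pi> 0) a)"
    using assms(2) by (intro integral_measure_pmf_real) auto
  also have "\<dots> = (\<Sum>a\<in>{0,1}. - H (\<pi> 0) * pmf (\<pi> 0) a)"
    by (simp add: \<Phi>_def mk_def E0_def)
  also have "\<dots> = - H (\<pi> 0) * (\<Sum>a\<in>{0,1}. pmf (\<pi> 0) a)"
    by (rule sum_distrib_left[symmetric])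
  also have "\<dots> = - H (\<pi> 0)"
    using sum_pmf_eq_1[of "{0,1}" "\<pi> 0"] assms(2) by simp
  finally show ?thesis .
qed

lemma JF_val:
  assumes "\<pi> 1 = return_pmf 0" "set_pmf (\<pi> 0) \<subseteq> {0,1}" "f \<in> borel_measurable traj_space"
  shows "(\<integral>\<omega>. f \<omega> \<partial>traj E0 \<pi>) = f (mk 0) * pmf (\<pi> 0) 0 + f (mk 1) * pmf (\<pi> 0) 1"
proof -
  have "(\<integral>\<omega>. f \<omega> \<partial>traj E0 \<pi>) = (\<integral>b. f (mk b) \<partial>measure_pmf (\<pi> 0))"
    unfolding traj_E0[of \<pi>, OF assms(1)]
    by (rule integral_distr) (auto simp: assms(3) space_stream_space)
  also have "\<dots> = (\<Sum>a\<in>{0,1}. f (mk a) * pmf (\<pi> 0) a)"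
    using assms(2) by (intro integral_measure_pmf_real) auto
  finally show ?thesis by simp
qed

definition pA :: "nat \<Rightarrow> nat pmf" where "pA = (\<lambda>s. return_pmf 0)"
definition pB :: "nat \<Rightarrow> nat pmf" where "pB = (\<lambda>s. return_pmf 0)(0 := return_pmf 1)"
definition pC :: "nat \<Rightarrow> nat pmf" where "pC = (\<lambda>s. return_pmf 0)(0 := pmf_of_set {0,1})"

lemma pols: "pA \<in> policies E0" "pB \<in> policies E0" "pC \<in> policies E0"
  by (auto simp: policies_def pA_def pB_def pC_def E0_def)

lemma H_vals: "H (pA 0) = 0" "H (pB 0) = 0" "H (pC 0) > 0"
proof -
  show "H (pA 0) = 0" "H (pB 0) = 0"
    by (auto simp: H_def shannon_entropy_def pA_def pB_def E0_def indicator_def)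
  have "H (pC 0) = - (ln (1/2) / 2 + ln (1/2) / 2)"
    by (simp add: H_def shannon_entropy_def pC_def E0_def)
  also have "\<dots> > 0" by (simp add: ln_div)
  finally show "H (pC 0) > 0" .
qed

lemma ord_pre: "preorder_on (policies E) (induced_ord E J)"
  unfolding preorder_on_def refl_on_def trans_def induced_ord_def by auto

lemma ord_total: "total_on (policies E) (induced_ord E J)"
  unfolding total_on_def induced_ord_def by auto

lemma RRL: "induced_ord E0 JR \<in> Ord_RRL E0"
  unfolding Ord_RRL_def JR_def
  by (rule CollectI, rule exI[of _ "\<lambda>_ _ _. 0"], rule exI[of _ 1], rule exI[of _ H],
      rule exI[of _ 0]) simp

lemma JRs: "JR pA = 0" "JR pB = 0" "JR pC < 0"
  using JR_val[of pA] JR_val[of pB] JR_val[of pC] H_vals by (simp_all add: pA_def pB_def pC_def)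

lemma FTR_vals:
  fixes f :: "(nat \<times> nat) stream \<Rightarrow> real"
  assumes f: "f \<in> borel_measurable traj_space"
  shows "(\<integral>\<omega>. f \<omega> \<partial>traj E0 pA) = f (mk 0)"
    "(\<integral>\<omega>. f \<omega> \<partial>traj E0 pB) = f (mk 1)"
    "(\<integral>\<omega>. f \<omega> \<partial>traj E0 pC) = f (mk 0) / 2 + f (mk 1) / 2"
  using JF_val[of pA f] JF_val[of pB f] JF_val[of pC f] f by (simp_all add: pA_def pB_def pC_def)

lemma notFTR: "induced_ord E0 JR \<notin> Ord_FTR E0"
proof
  let ?O = "induced_ord E0 JR"
  assume "?O \<in> Ord_FTR E0"
  then obtain f where f: "f \<in> borel_measurable traj_space"
    and eq: "?O = induced_ord E0 (\<lambda>\<pi>. \<integral>\<omega>. f \<omega> \<partial>traj E0 \<pi>)"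
    unfolding Ord_FTR_def by blast
  let ?F = "induced_ord E0 (\<lambda>\<pi>. \<integral>\<omega>. f \<omega> \<partial>traj E0 \<pi>)"
  have m1: "(pA, pB) \<in> ?O" and m2: "(pB, pA) \<in> ?O" and m3: "(pC, pA) \<notin> ?O"
    using pols JRs unfolding induced_ord_def by auto
  have n1: "(pA, pB) \<in> ?F" and n2: "(pB, pA) \<in> ?F" and n3: "(pC, pA) \<notin> ?F"
    using m1 m2 m3 unfolding eq by auto
  note FV = FTR_vals[OF f]
  have a: "f (mk 0) \<ge> f (mk 1)"
    using n1 FV unfolding induced_ord_def by auto
  have b: "f (mk 1) \<ge> f (mk 0)"
    using n2 FV unfolding induced_ord_def by auto
  have c: "\<not> f (mk 0) / 2 + f (mk 1) / 2 \<ge> f (mk 0)"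
    using n3 pols FV unfolding induced_ord_def by auto
  show False using a b c by linarith
qed

theorem mainTheorem15:
  shows "\<exists>E Ord. wf_env E
     \<and> preorder_on (policies E) Ord \<and> total_on (policies E) Ord
     \<and> Ord \<in> Ord_RRL E \<and> Ord \<notin> Ord_FTR E
     \<and> (\<exists>R \<alpha> \<gamma>. \<alpha> > 0 \<and> 0 \<le> \<gamma> \<and> \<gamma> < 1
          \<and> Ord = induced_ord E (J_RRL E R \<alpha> (shannon_entropy (Ac E)) \<gamma>))"
  apply (rule exI[of _ E0], rule exI[of _ "induced_ord E0 JR"])
  apply (intro conjI wf_E0 ord_pre ord_total RRL notFTR)
  apply (rule exI[of _ "\<lambda>_ _ _. 0"], rule exI[of _ 1], rule exI[of _ 0])
  apply (simp add: JR_def H_def)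
  done

end
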